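(* Let $\mathrm{HTG}(m,n,\ell)$ be a honeycomb toroidal graph in normal form ($0\le \ell\le n/2$). Its girth is $6$, except in the following cases, in which its girth is $4$: (1) $n=4$; (2) $m=1$, $n>4$ and $\ell=3$; (3) $m=1$, $n>4$, $n\equiv 2\pmod 4$ and $\ell=n/2$; (4) $m=1$, $n>4$, $n\equiv 0\pmod 4$ and $\ell=(n-2)/2$; (5) $m=2$, $n>4$ and $\ell\in\{0,2\}$.
   Context: Honeycomb toroidal graph: let $m\ge 1$ be an integer, $n\ge 4$ an even integer, and $\ell$ an integer with $\ell\equiv m \pmod 2$. The graph $\mathrm{HTG}(m,n,\ell)$ has vertex set $\{u_{i,j}: 0\le i\le m-1,\ j\in\mathbb{Z}_n\}$ (second subscripts are taken modulo $n$; the vertices $u_{i,0},\dots,u_{i,n-1}$ form column $i$) and the following edges: vertical edges $u_{i,j}u_{i,j+1}$ for all $0\le i\le m-1$ and all $j$; flat edges $u_{i,j}u_{i+1,j}$ for $0\le i\le m-2$ and all $j$ with $i+j$ odd; jump edges $u_{m-1,j}u_{0,j+\ell}$ for all $j$ with $j\equiv m\pmod 2$. Only parameters for which this is a simple 3-regular graph are allowed (in particular, when $m=1$ one requires $\ell\not\equiv\pm1\pmod n$). The graph is in normal form if $0\le\ell\le n/2$. The girth is the length of a shortest cycle. *)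

theory Defs
  imports Main
begin

text \<open>Vertex u_{i,j} is the pair (i,j) with i < m and j in {0..<n} (representatives of Z_n).\<close>

definition htg_verts :: "nat \<Rightarrow> nat \<Rightarrow> (nat \<times> nat) set" where
  "htg_verts m n = {(i, j). i < m \<and> j < n}"

definition htg_edge :: "nat \<Rightarrow> nat \<Rightarrow> int \<Rightarrow> nat \<times> nat \<Rightarrow> nat \<times> nat \<Rightarrow> bool" where
  "htg_edge m n l v w =
     (case v of (i, j) \<Rightarrow> case w of (i', j') \<Rightarrow>
        (i' = i \<and> j' = (j + 1) mod n)
      \<or> (i + 1 \<le> m - 1 \<and> i' = i + 1 \<and> j' = j \<and> odd (i + j))
      \<or> (i = m - 1 \<and> i' = 0 \<and> j mod 2 = m mod 2 \<and> int j' = (int j + l) mod int n))"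

definition htg_adj :: "nat \<Rightarrow> nat \<Rightarrow> int \<Rightarrow> nat \<times> nat \<Rightarrow> nat \<times> nat \<Rightarrow> bool" where
  "htg_adj m n l v w =
     (v \<in> htg_verts m n \<and> w \<in> htg_verts m n \<and> (htg_edge m n l v w \<or> htg_edge m n l w v))"

definition htg_simple_cubic :: "nat \<Rightarrow> nat \<Rightarrow> int \<Rightarrow> bool" where
  "htg_simple_cubic m n l =
     (\<forall>v \<in> htg_verts m n. \<not> htg_adj m n l v v \<and> card {w. htg_adj m n l v w} = 3)"

definition is_cycle :: "'a set \<Rightarrow> ('a \<Rightarrow> 'a \<Rightarrow> bool) \<Rightarrow> 'a list \<Rightarrow> bool" where
  "is_cycle V E c =
     (3 \<le> length c \<and> distinct c \<and> set c \<subseteq> V \<and>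
      (\<forall>k < length c. E (c ! k) (c ! ((k + 1) mod length c))))"

definition girth :: "'a set \<Rightarrow> ('a \<Rightarrow> 'a \<Rightarrow> bool) \<Rightarrow> nat" where
  "girth V E = (LEAST k. \<exists>c. is_cycle V E c \<and> length c = k)"

end

theory Submission
  imports Defs
begin


definition st :: "nat \<Rightarrow> nat \<Rightarrow> int \<Rightarrow> nat \<Rightarrow> bool" where
  "st n a k b = (int n dvd (int b - int a - k))"

lemma st_trans: "st n a k1 b \<Longrightarrow> st n b k2 c \<Longrightarrow> st n a (k1+k2) c"
proof -
  assume h: "st n a k1 b" "st n b k2 c"
  have e: "int c - int a - (k1+k2) = (int c - int b - k2) + (int b - int a - k1)" by simp
  have "int n dvd ((int c - int b - k2) + (int b - int a - k1))"
    using h unfolding st_def by (intro dvd_add)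
  then show ?thesis unfolding st_def e .
qed

lemma st_sym: "st n a k b \<Longrightarrow> st n b (-k) a"
proof -
  assume h: "st n a k b"
  have e: "int a - int b - (-k) = - (int b - int a - k)" by simp
  have "int n dvd - (int b - int a - k)" using h unfolding st_def by (simp only: dvd_minus_iff)
  then show ?thesis unfolding st_def e .
qed

lemma st_self: "st n a k a \<Longrightarrow> int n dvd k"
  unfolding st_def by simp

lemma dvd_small: fixes x :: int assumes "int n dvd x" "\<bar>x\<bar> < int n" shows "x = 0"
proof (rule ccontr)
  assume "x \<noteq> 0"
  then have "\<bar>int n\<bar> \<le> \<bar>x\<bar>" using dvd_imp_le_int assms(1) by blast
  then show False using assms(2) by simp
qed

lemma st_zero: "st n a 0 b \<Longrightarrow> a < n \<Longrightarrow> b < n \<Longrightarrow> a = b"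
  unfolding st_def using dvd_small[of n "int b - int a"] by auto

lemma st_uniq: "st n a k b \<Longrightarrow> st n a k b' \<Longrightarrow> b < n \<Longrightarrow> b' < n \<Longrightarrow> b = b'"
proof -
  assume h: "st n a k b" "st n a k b'" "b < n" "b' < n"
  have "st n b (-k + k) b'" using st_trans[OF st_sym[OF h(1)] h(2)] .
  then show ?thesis using st_zero h(3,4) by simp
qed

lemma st_uniq2: "st n a k b \<Longrightarrow> st n a' k b \<Longrightarrow> a < n \<Longrightarrow> a' < n \<Longrightarrow> a = a'"
proof -
  assume h: "st n a k b" "st n a' k b" "a < n" "a' < n"
  have "st n a (k + - k) a'" using st_trans[OF h(1) st_sym[OF h(2)]] .
  then show ?thesis using st_zero h(3,4) by simp
qed

lemma st_par: "even n \<Longrightarrow> st n a k b \<Longrightarrow> even (int b) = even (int a + k)"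
proof -
  assume h: "even n" "st n a k b"
  have "(2::int) dvd int n" using h(1) by simp
  then have ev: "even (int b - int a - k)" using h(2) unfolding st_def by (rule dvd_trans)
  have e: "int b = (int b - int a - k) + (int a + k)" by simp
  show ?thesis by (subst e) (simp only: even_add ev simp_thms)
qed

lemma modeq: "0 < n \<Longrightarrow> j' < n \<Longrightarrow> (int j' = x mod int n) \<longleftrightarrow> int n dvd (int j' - x)"
proof -
  assume h: "0 < n" "j' < n"
  have "int j' = int j' mod int n" using h by simp
  then have "(int j' = x mod int n) \<longleftrightarrow> (int j' mod int n = x mod int n)" by simp
  also have "\<dots> \<longleftrightarrow> int n dvd (int j' - x)" by (rule mod_eq_dvd_iff)
  finally show ?thesis .
qed

definition VE :: "nat \<Rightarrow> nat \<Rightarrow> nat \<Rightarrow> nat \<Rightarrow> nat \<Rightarrow> bool" where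
  "VE n i j i' j' = (i' = i \<and> st n j 1 j')"
definition FE :: "nat \<Rightarrow> nat \<Rightarrow> nat \<Rightarrow> nat \<Rightarrow> nat \<Rightarrow> bool" where
  "FE m i j i' j' = (i+1 \<le> m-1 \<and> i'=i+1 \<and> j'=j \<and> odd(i+j))"
definition JE :: "nat \<Rightarrow> nat \<Rightarrow> int \<Rightarrow> nat \<Rightarrow> nat \<Rightarrow> nat \<Rightarrow> nat \<Rightarrow> bool" where
  "JE m n l i j i' j' = (i=m-1 \<and> i'=0 \<and> j mod 2 = m mod 2 \<and> st n j l j')"
definition vert :: "nat \<Rightarrow> nat \<Rightarrow> nat \<Rightarrow> nat \<Rightarrow> nat \<Rightarrow> bool" where
  "vert n i j i' j' = (VE n i j i' j' \<or> VE n i' j' i j)"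
definition H :: "nat \<Rightarrow> nat \<Rightarrow> int \<Rightarrow> nat \<Rightarrow> nat \<Rightarrow> nat \<Rightarrow> nat \<Rightarrow> bool" where
  "H m n l i j i' j' = (FE m i j i' j' \<or> FE m i' j' i j \<or> JE m n l i j i' j' \<or> JE m n l i' j' i j)"
definition hr :: "nat \<Rightarrow> nat \<Rightarrow> int \<Rightarrow> nat \<Rightarrow> nat \<Rightarrow> nat \<Rightarrow> nat \<Rightarrow> bool" where
  "hr m n l i j i' j' = (H m n l i j i' j' \<and> \<not> vert n i j i' j')"

lemma edge_iff:
  assumes "0 < n" "j' < n"
  shows "htg_edge m n l (i,j) (i',j') \<longleftrightarrow> VE n i j i' j' \<or> FE m i j i' j' \<or> JE m n l i j i' j'"
proof -
  have 1: "(j' = (j+1) mod n) \<longleftrightarrow> st n j 1 j'"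
  proof -
    have "(j' = (j+1) mod n) \<longleftrightarrow> (int j' = int ((j+1) mod n))" by simp
    also have "\<dots> \<longleftrightarrow> (int j' = (int j + 1) mod int n)" by (simp only: zmod_int of_nat_add of_nat_1)
    also have "\<dots> \<longleftrightarrow> st n j 1 j'" unfolding st_def diff_diff_eq by (rule modeq[OF assms])
    finally show ?thesis .
  qed
  have 2: "(int j' = (int j + l) mod int n) \<longleftrightarrow> st n j l j'"
    unfolding st_def diff_diff_eq by (rule modeq[OF assms])
  show ?thesis unfolding htg_edge_def VE_def FE_def JE_def prod.case 1 2 by (rule refl)
qed

lemma verts_iff: "(i,j) \<in> htg_verts m n \<longleftrightarrow> i < m \<and> j < n"
  unfolding htg_verts_def by simp

lemma adj_iff:
  assumes "0 < n"
  shows "htg_adj m n l (i,j) (i',j') \<longleftrightarrow> i < m \<and> j < n \<and> i' < m \<and> j' < n \<and> (vert n i j i' j' \<or> H m n l i j i' j')"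
proof (cases "j < n \<and> j' < n")
  case True
  have e1: "htg_edge m n l (i,j) (i',j') \<longleftrightarrow> VE n i j i' j' \<or> FE m i j i' j' \<or> JE m n l i j i' j'"
    by (rule edge_iff[OF assms]) (use True in simp)
  have e2: "htg_edge m n l (i',j') (i,j) \<longleftrightarrow> VE n i' j' i j \<or> FE m i' j' i j \<or> JE m n l i' j' i j"
    by (rule edge_iff[OF assms]) (use True in simp)
  show ?thesis unfolding htg_adj_def verts_iff vert_def H_def e1 e2 using True by blast
next
  case False
  then show ?thesis unfolding htg_adj_def verts_iff by blast
qed

lemma vert_sym: "vert n i j i' j' \<Longrightarrow> vert n i' j' i j" unfolding vert_def by auto
lemma H_sym: "H m n l i j i' j' \<Longrightarrow> H m n l i' j' i j" unfolding H_def by auto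
lemma hr_sym: "hr m n l i j i' j' \<Longrightarrow> hr m n l i' j' i j" unfolding hr_def using H_sym vert_sym by blast

lemma vert_st: "vert n i j i' j' \<Longrightarrow> i' = i \<and> (\<exists>d. (d = 1 \<or> d = -1) \<and> st n j d j')"
  unfolding vert_def VE_def using st_sym by fastforce

lemma st_vert: "i' = i \<Longrightarrow> st n j 1 j' \<or> st n j (-1) j' \<Longrightarrow> vert n i j i' j'"
  unfolding vert_def VE_def using st_sym by fastforce



lemma fp_fm: "FE m i j i1 j1 \<Longrightarrow> FE m i2 j2 i j \<Longrightarrow> False"
  unfolding FE_def by presburger
lemma fp_jp: "FE m i j i1 j1 \<Longrightarrow> JE m n l i j i2 j2 \<Longrightarrow> False"
  unfolding FE_def JE_def by linarith
lemma fp_jm: "FE m i j i1 j1 \<Longrightarrow> JE m n l i2 j2 i j \<Longrightarrow> even j \<Longrightarrow> False"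
  unfolding FE_def JE_def by simp
lemma fm_jp: "FE m i1 j1 i j \<Longrightarrow> JE m n l i j i2 j2 \<Longrightarrow> False"
  unfolding FE_def JE_def by presburger
lemma fm_jm: "FE m i1 j1 i j \<Longrightarrow> JE m n l i2 j2 i j \<Longrightarrow> False"
  unfolding FE_def JE_def by simp
lemma jp_jm: "JE m n l i j i1 j1 \<Longrightarrow> JE m n l i2 j2 i j \<Longrightarrow> even j \<Longrightarrow> m \<ge> 1 \<Longrightarrow> False"
proof -
  assume a: "JE m n l i j i1 j1" "JE m n l i2 j2 i j" "even j" "m \<ge> 1"
  then have "m = 1" "j mod 2 = m mod 2" unfolding JE_def by auto
  with a(3) show False by simp
qed
lemma ff: "FE m i j i1 j1 \<Longrightarrow> FE m i j i2 j2 \<Longrightarrow> i1 = i2 \<and> j1 = j2"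
  unfolding FE_def by simp
lemma ff': "FE m i1 j1 i j \<Longrightarrow> FE m i2 j2 i j \<Longrightarrow> i1 = i2 \<and> j1 = j2"
  unfolding FE_def by simp
lemma jj: "JE m n l i j i1 j1 \<Longrightarrow> JE m n l i j i2 j2 \<Longrightarrow> j1 < n \<Longrightarrow> j2 < n \<Longrightarrow> i1 = i2 \<and> j1 = j2"
  unfolding JE_def using st_uniq by blast
lemma jj': "JE m n l i1 j1 i j \<Longrightarrow> JE m n l i2 j2 i j \<Longrightarrow> j1 < n \<Longrightarrow> j2 < n \<Longrightarrow> i1 = i2 \<and> j1 = j2"
  unfolding JE_def using st_uniq2 by blast

lemma JE_even: "JE m n l x y i z \<Longrightarrow> even n \<Longrightarrow> l mod 2 = int m mod 2 \<Longrightarrow> even z"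
proof -
  assume a: "JE m n l x y i z" "even n" "l mod 2 = int m mod 2"
  then have y: "y mod 2 = m mod 2" and s: "st n y l z" by (auto simp: JE_def)
  have "int y mod 2 = int m mod 2" using y by (metis of_nat_mod of_nat_numeral)
  then have "even (int y + l)" using a(3) by presburger
  then show ?thesis using st_par[OF a(2) s] by simp
qed

lemma huniq:
  assumes "m \<ge> 1" "even n" "l mod 2 = int m mod 2"
  and "j1<n" "j2<n"
  and h1: "H m n l i j i1 j1" and h2: "H m n l i j i2 j2"
  shows "i1 = i2 \<and> j1 = j2"
proof -
  note e = JE_even[OF _ assms(2,3)]
  show ?thesis
  using h1 h2 unfolding H_def
  apply (elim disjE)
  by (metis e assms(1,4,5) fp_fm fp_jp fp_jm fm_jp fm_jm jp_jm ff ff' jj jj')+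
qed

lemma H_col: "H m n l i j i' j' \<Longrightarrow> 2 \<le> m \<Longrightarrow> i \<noteq> i'"
  unfolding H_def FE_def JE_def by auto

lemma adj_par:
  assumes "htg_adj m n l (i,j) (i',j')" "even n" "l mod 2 = int m mod 2" "m \<ge> 1" "0 < n"
  shows "even (i+j) \<noteq> even (i'+j')"
proof -
  from assms(1)[unfolded adj_iff[OF assms(5)]] have "vert n i j i' j' \<or> H m n l i j i' j'" by blast
  then show ?thesis
  proof
    assume vv: "vert n i j i' j'"
    obtain d where d: "d = 1 \<or> d = -1" "st n j d j'" and c: "i' = i" using vert_st[OF vv] by blast
    have "even (int j') = even (int j + d)" by (rule st_par[OF assms(2) d(2)])
    then have "even j' = (\<not> even j)" using d(1) by (auto simp: even_add)
    then show ?thesis using c by (simp add: even_add)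
  next
    assume "H m n l i j i' j'"
    then consider (a) "FE m i j i' j'" | (b) "FE m i' j' i j" | (c) "JE m n l i j i' j'" | (d) "JE m n l i' j' i j"
      unfolding H_def by blast
    then show ?thesis
    proof cases
      case a then show ?thesis unfolding FE_def by simp
    next
      case b then show ?thesis unfolding FE_def by simp
    next
      case c
      then have x: "i = m - 1" "i' = 0" "j mod 2 = m mod 2" by (auto simp: JE_def)
      have "even j'" using JE_even[OF c assms(2,3)] .
      moreover have "odd (m - 1 + j)" using x(3) assms(4) by presburger
      ultimately show ?thesis using x(1,2) by simp
    next
      case d
      then have x: "i' = m - 1" "i = 0" "j' mod 2 = m mod 2" by (auto simp: JE_def)
      have "even j" using JE_even[OF d assms(2,3)] .
      moreover have "odd (m - 1 + j')" using x(3) assms(4) by presburger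
      ultimately show ?thesis using x(1,2) by simp
    qed
  qed
qed

lemma p0:
  assumes "n \<ge> 4" "j0<n" "j1<n" "j2<n" "j3<n"
  "vert n i0 j0 i1 j1" "vert n i1 j1 i2 j2" "vert n i2 j2 i3 j3" "vert n i3 j3 i0 j0"
  "(i0,j0) \<noteq> (i2,j2)" "(i1,j1) \<noteq> (i3,j3)"
  shows "n = 4"
proof -
  obtain d0 where d0: "d0 = 1 \<or> d0 = -1" "st n j0 d0 j1" and c0: "i1 = i0" using vert_st[OF assms(6)] by blast
  obtain d1 where d1: "d1 = 1 \<or> d1 = -1" "st n j1 d1 j2" and c1: "i2 = i1" using vert_st[OF assms(7)] by blast
  obtain d2 where d2: "d2 = 1 \<or> d2 = -1" "st n j2 d2 j3" and c2: "i3 = i2" using vert_st[OF assms(8)] by blast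
  obtain d3 where d3: "d3 = 1 \<or> d3 = -1" "st n j3 d3 j0" and c3: "i0 = i3" using vert_st[OF assms(9)] by blast
  have n01: "d0 + d1 \<noteq> 0"
  proof
    assume "d0 + d1 = 0"
    then have "st n j0 0 j2" using st_trans[OF d0(2) d1(2)] by simp
    then have "j0 = j2" using st_zero assms(2,4) by blast
    then show False using assms(10) c0 c1 by simp
  qed
  have n12: "d1 + d2 \<noteq> 0"
  proof
    assume "d1 + d2 = 0"
    then have "st n j1 0 j3" using st_trans[OF d1(2) d2(2)] by simp
    then have "j1 = j3" using st_zero assms(3,5) by blast
    then show False using assms(11) c1 c2 by simp
  qed
  have n23: "d2 + d3 \<noteq> 0"
  proof
    assume "d2 + d3 = 0"
    then have "st n j2 0 j0" using st_trans[OF d2(2) d3(2)] by simp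
    then have "j2 = j0" using st_zero assms(2,4) by blast
    then show False using assms(10) c2 c3 by simp
  qed
  have n30: "d3 + d0 \<noteq> 0"
  proof
    assume "d3 + d0 = 0"
    then have "st n j3 0 j1" using st_trans[OF d3(2) d0(2)] by simp
    then have "j3 = j1" using st_zero assms(3,5) by blast
    then show False using assms(11) c3 c0 by simp
  qed
  have "st n j0 (d0+d1+d2+d3) j0" by (rule st_trans[OF st_trans[OF st_trans[OF d0(2) d1(2)] d2(2)] d3(2)])
  then have dv: "int n dvd (d0+d1+d2+d3)" by (rule st_self)
  have "d0+d1+d2+d3 = 4 \<or> d0+d1+d2+d3 = -4" using d0(1) d1(1) d2(1) d3(1) n01 n12 n23 n30 by auto
  then have "int n dvd 4" using dv by auto
  then have "int n \<le> 4" by (rule zdvd_imp_le) simp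
  then show "n = 4" using assms(1) by simp
qed

lemma fin1:
  fixes l t :: int
  assumes "int n dvd (l + t)" "t = 1 \<or> t = -1 \<or> t = 3 \<or> t = -3" "l \<noteq> 1" "0 \<le> l" "2*l \<le> int n" "n \<ge> 4" "even n"
  shows "n = 4 \<or> l = 3"
proof (cases "l + t = 0")
  case True then show ?thesis using assms(2-4) by auto
next
  case False
  then have "\<bar>int n\<bar> \<le> \<bar>l + t\<bar>" using dvd_imp_le_int[OF False assms(1)] by simp
  then have ge: "int n \<le> l + t" using assms(2,4,6) by auto
  obtain N where N: "n = 2*N" using assms(7) by auto
  show ?thesis using ge N assms(2-6) by presburger
qed

lemma p1:
  assumes pa: "m \<ge> 1" "n \<ge> 4" "even n" "l mod 2 = int m mod 2" "0 \<le> l" "2*l \<le> int n"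
  and h: "hr m n l i0 j0 i1 j1"
  and v: "vert n i1 j1 i2 j2" "vert n i2 j2 i3 j3" "vert n i3 j3 i0 j0"
  shows "n = 4 \<or> (m = 1 \<and> l = 3)"
proof -
  obtain d1 where d1: "d1 = 1 \<or> d1 = -1" "st n j1 d1 j2" and c1: "i2 = i1" using vert_st[OF v(1)] by blast
  obtain d2 where d2: "d2 = 1 \<or> d2 = -1" "st n j2 d2 j3" and c2: "i3 = i2" using vert_st[OF v(2)] by blast
  obtain d3 where d3: "d3 = 1 \<or> d3 = -1" "st n j3 d3 j0" and c3: "i0 = i3" using vert_st[OF v(3)] by blast
  have s: "st n j1 (d1+d2+d3) j0" using st_trans[OF st_trans[OF d1(2) d2(2)] d3(2)] .
  have eq: "i1 = i0" using c1 c2 c3 by simp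
  have H1: "H m n l i0 j0 i1 j1" and nv: "\<not> vert n i0 j0 i1 j1" using h unfolding hr_def by auto
  have m1: "m = 1"
  proof (rule ccontr)
    assume "m \<noteq> 1"
    then have "2 \<le> m" using pa(1) by simp
    with H_col[OF H1] eq show False by simp
  qed
  have J: "st n j0 l j1 \<or> st n j1 l j0" using H1 m1 unfolding H_def FE_def JE_def by auto
  have l1: "l \<noteq> 1"
  proof
    assume "l = 1"
    then have "st n j0 1 j1 \<or> st n j0 (-1) j1" using J st_sym by fastforce
    then have "vert n i0 j0 i1 j1" using st_vert eq by blast
    with nv show False ..
  qed
  have ds: "d1+d2+d3 = 1 \<or> d1+d2+d3 = -1 \<or> d1+d2+d3 = 3 \<or> d1+d2+d3 = -3" using d1(1) d2(1) d3(1) by auto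
  obtain t where t: "t = 1 \<or> t = -1 \<or> t = 3 \<or> t = -3" "int n dvd (l + t)"
  proof -
    from J show ?thesis
    proof
      assume "st n j0 l j1"
      then have "st n j0 (l + (d1+d2+d3)) j0" using st_trans s by blast
      then have "int n dvd (l + (d1+d2+d3))" by (rule st_self)
      then show ?thesis using ds by (intro that) auto
    next
      assume "st n j1 l j0"
      then have "st n j1 (l + - (d1+d2+d3)) j1" using st_trans st_sym[OF s] by blast
      then have "int n dvd (l + - (d1+d2+d3))" by (rule st_self)
      then show ?thesis using ds by (intro that) auto
    qed
  qed
  show ?thesis using fin1[OF t(2) t(1) l1 pa(5) pa(6) pa(2) pa(3)] m1 by auto
qed



definition EXC :: "nat \<Rightarrow> nat \<Rightarrow> int \<Rightarrow> bool" where
  "EXC m n l = (n = 4 \<or> (m = 1 \<and> l = 3) \<or> (m = 1 \<and> n mod 4 = 2 \<and> 2*l = int n)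
     \<or> (m = 1 \<and> n mod 4 = 0 \<and> 2*l = int n - 2) \<or> (m = 2 \<and> (l = 0 \<or> l = 2)))"

lemma Qlem:
  fixes l s :: int
  assumes "int n dvd (l + s)" "s = -2 \<or> s = 0 \<or> s = 2" "0 \<le> l" "2*l \<le> int n" "n \<ge> 4"
  shows "l = 0 \<or> l = 2 \<or> n = 4"
proof (cases "l + s = 0")
  case True then show ?thesis using assms(2,3) by auto
next
  case False
  then have "\<bar>int n\<bar> \<le> \<bar>l + s\<bar>" using dvd_imp_le_int[OF False assms(1)] by simp
  then have ge: "int n \<le> l + s" using assms(2,3,5) by auto
  then have "n = 4" using assms(2,4,5) by auto
  then show ?thesis by simp
qed

lemma Rlem:
  fixes l s :: int
  assumes "int n dvd (2*l + s)" "s = -2 \<or> s = 0 \<or> s = 2" "odd l" "l \<noteq> 1" "0 \<le> l" "2*l \<le> int n" "n \<ge> 4" "even n"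
  shows "n = 4 \<or> (n mod 4 = 2 \<and> 2*l = int n) \<or> (n mod 4 = 0 \<and> 2*l = int n - 2)"
proof -
  have nz: "2*l + s \<noteq> 0" using assms(2-5) by presburger
  have "\<bar>int n\<bar> \<le> \<bar>2*l + s\<bar>" using dvd_imp_le_int[OF nz assms(1)] by simp
  then have ge: "int n \<le> 2*l + s" using assms(2,5,7) by auto
  have "int n dvd (2*l + s - int n)" using assms(1) by (simp add: dvd_diff)
  moreover have "\<bar>2*l + s - int n\<bar> < int n" using ge assms(2,6,7) by auto
  ultimately have "2*l + s - int n = 0" by (rule dvd_small)
  then have e: "2*l = int n - s" by simp
  show ?thesis using e assms(2,3,6,7,8) by presburger
qed

lemma p2:
  assumes pa: "m \<ge> 1" "n \<ge> 4" "even n" "l mod 2 = int m mod 2" "0 \<le> l" "2*l \<le> int n"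
  and h1: "hr m n l ia ja ib jb" and v1: "vert n ib jb ic jc"
  and h2: "hr m n l ic jc idd jd" and v2: "vert n idd jd ia ja"
  shows "EXC m n l"
proof -
  obtain s1 where s1: "s1 = 1 \<or> s1 = -1" "st n jb s1 jc" and cb: "ic = ib" using vert_st[OF v1] by blast
  obtain s2 where s2: "s2 = 1 \<or> s2 = -1" "st n jd s2 ja" and cd: "ia = idd" using vert_st[OF v2] by blast
  have "even (int jc) = even (int jb + s1)" by (rule st_par[OF pa(3) s1(2)])
  then have pb: "even jc = (\<not> even jb)" using s1(1) by (auto simp: even_add)
  have "even (int ja) = even (int jd + s2)" by (rule st_par[OF pa(3) s2(2)])
  then have pa': "even ja = (\<not> even jd)" using s2(1) by (auto simp: even_add)
  have ss: "s1 + s2 = -2 \<or> s1 + s2 = 0 \<or> s1 + s2 = 2" using s1(1) s2(1) by auto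
  have ss': "-(s1 + s2) = -2 \<or> -(s1 + s2) = 0 \<or> -(s1 + s2) = 2" using s1(1) s2(1) by auto
  have nv1: "\<not> vert n ia ja ib jb" using h1 unfolding hr_def by simp
  from h1 consider (A1) "FE m ia ja ib jb" | (A2) "FE m ib jb ia ja" | (A3) "JE m n l ia ja ib jb" | (A4) "JE m n l ib jb ia ja"
    unfolding hr_def H_def by blast
  note hA = this
  from h2 consider (C1) "FE m ic jc idd jd" | (C2) "FE m idd jd ic jc" | (C3) "JE m n l ic jc idd jd" | (C4) "JE m n l idd jd ic jc"
    unfolding hr_def H_def by blast
  note hC = this
  have Qe: "EXC m n l" if "m = 2" "int n dvd (l + s)" "s = -2 \<or> s = 0 \<or> s = 2" for s
    using Qlem[OF that(2,3) pa(5,6,2)] that(1) unfolding EXC_def by auto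
  have Re: "EXC m n l" if "m = 1" "int n dvd (2*l + s)" "s = -2 \<or> s = 0 \<or> s = 2" "l \<noteq> 1" for s
  proof -
    have "l mod 2 = 1" using pa(4) that(1) by simp
    then have "odd l" by presburger
    from Rlem[OF that(2,3) this that(4) pa(5,6,2,3)] that(1) show ?thesis unfolding EXC_def by auto
  qed
  show ?thesis
  proof (cases rule: hA)
    case A1
    then have a: "ib = ia + 1" "jb = ja" "ia + 1 \<le> m - 1" "odd (ia + ja)" unfolding FE_def by auto
    show ?thesis
    proof (cases rule: hC)
      case C1 then show ?thesis using a cb cd unfolding FE_def by simp
    next
      case C2
      then have "jc = jd" "odd (idd + jd)" unfolding FE_def by auto
      then show ?thesis using a cb cd pb by simp
    next
      case C3
      then have c: "ic = m - 1" "idd = 0" "st n jc l jd" unfolding JE_def by auto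
      have m2: "m = 2" using a c cb cd by simp
      have "st n ja (s1 + l + s2) ja" using st_trans[OF st_trans[OF s1(2) c(3)] s2(2)] a(2) by simp
      then have "int n dvd (s1 + l + s2)" by (rule st_self)
      then have "int n dvd (l + (s1 + s2))" by (simp add: ac_simps)
      then show ?thesis using Qe m2 ss by blast
    next
      case C4 then show ?thesis using a cb cd unfolding JE_def by simp
    qed
  next
    case A2
    then have a: "ia = ib + 1" "ja = jb" "ib + 1 \<le> m - 1" "odd (ib + jb)" unfolding FE_def by auto
    show ?thesis
    proof (cases rule: hC)
      case C1
      then have "jd = jc" "odd (ic + jc)" unfolding FE_def by auto
      then show ?thesis using a cb cd pb by simp
    next
      case C2 then show ?thesis using a cb cd unfolding FE_def by simp
    next
      case C3 then show ?thesis using a cb cd unfolding JE_def by simp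
    next
      case C4
      then have c: "idd = m - 1" "ic = 0" "st n jd l jc" unfolding JE_def by auto
      have m2: "m = 2" using a c cb cd by simp
      have "st n jc (- l + (s2 + s1)) jc"
        using st_trans[OF st_sym[OF c(3)] st_trans[OF s2(2) s1(2)[unfolded a(2)[symmetric]]]] by simp
      then have "int n dvd (- l + (s2 + s1))" by (rule st_self)
      then have "int n dvd (l + - (s1 + s2))"
        by (metis add.commute dvd_minus_iff minus_add_distrib minus_minus)
      then show ?thesis using Qe m2 ss' by blast
    qed
  next
    case A3
    then have a: "ia = m - 1" "ib = 0" "ja mod 2 = m mod 2" "st n ja l jb" unfolding JE_def by auto
    show ?thesis
    proof (cases rule: hC)
      case C1
      then have c: "idd = ic + 1" "jd = jc" unfolding FE_def by auto
      have m2: "m = 2" using a c cb cd pa(1) C1 unfolding FE_def by auto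
      have "st n ja (l + s1 + s2) ja" using st_trans[OF st_trans[OF a(4) s1(2)] s2(2)[unfolded c(2)]] by simp
      then have "int n dvd (l + s1 + s2)" by (rule st_self)
      then have "int n dvd (l + (s1 + s2))" by (simp add: ac_simps)
      then show ?thesis using Qe m2 ss by blast
    next
      case C2 then show ?thesis using a cb cd unfolding FE_def by simp
    next
      case C3
      then have c: "ic = m - 1" "idd = 0" "st n jc l jd" unfolding JE_def by auto
      have m1: "m = 1" using a c cb pa(1) by simp
      have l1: "l \<noteq> 1"
      proof
        assume "l = 1"
        then have "vert n ia ja ib jb" using st_vert a(4) a(1,2) m1 by simp
        with nv1 show False ..
      qed
      have "st n ja (l + s1 + l + s2) ja"
        using st_trans[OF st_trans[OF st_trans[OF a(4) s1(2)] c(3)] s2(2)] by simp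
      then have "int n dvd (l + s1 + l + s2)" by (rule st_self)
      then have "int n dvd (2*l + (s1 + s2))" by (simp add: algebra_simps)
      then show ?thesis using Re m1 ss l1 by blast
    next
      case C4
      then have "jd mod 2 = m mod 2" unfolding JE_def by auto
      then show ?thesis using a(3) pa' by presburger
    qed
  next
    case A4
    then have a: "ib = m - 1" "ia = 0" "jb mod 2 = m mod 2" "st n jb l ja" unfolding JE_def by auto
    show ?thesis
    proof (cases rule: hC)
      case C1 then show ?thesis using a cb cd unfolding FE_def by simp
    next
      case C2
      then have c: "ic = idd + 1" "jc = jd" unfolding FE_def by auto
      have m2: "m = 2" using a c cb cd pa(1) C2 unfolding FE_def by auto
      have "st n ja (- l + (s1 + s2)) ja"
        using st_trans[OF st_sym[OF a(4)] st_trans[OF s1(2) s2(2)[unfolded c(2)[symmetric]]]] by simp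
      then have "int n dvd (- l + (s1 + s2))" by (rule st_self)
      then have "int n dvd (l + - (s1 + s2))"
        by (metis add.commute dvd_minus_iff minus_add_distrib minus_minus)
      then show ?thesis using Qe m2 ss' by blast
    next
      case C3
      then have "jc mod 2 = m mod 2" unfolding JE_def by auto
      then show ?thesis using a(3) pb by presburger
    next
      case C4
      then have c: "idd = m - 1" "ic = 0" "st n jd l jc" unfolding JE_def by auto
      have m1: "m = 1" using a c cb pa(1) by simp
      have l1: "l \<noteq> 1"
      proof
        assume "l = 1"
        then have "st n ja (-1) jb" using st_sym[OF a(4)] by simp
        then have "vert n ia ja ib jb" using st_vert a(1,2) m1 by simp
        with nv1 show False ..
      qed
      have "st n jb (s1 + - l + s2 + - l) jb"
        using st_trans[OF st_trans[OF st_trans[OF s1(2) st_sym[OF c(3)]] s2(2)] st_sym[OF a(4)]] by simp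
      then have "int n dvd (s1 + - l + s2 + - l)" by (rule st_self)
      then have "int n dvd - (s1 + - l + s2 + - l)" by (simp only: dvd_minus_iff)
      then have "int n dvd (2*l + - (s1 + s2))" by (simp add: algebra_simps)
      then show ?thesis using Re m1 ss' l1 by blast
    qed
  qed
qed



lemma adj_cases:
  assumes "0 < n" "htg_adj m n l (i,j) (i',j')"
  shows "vert n i j i' j' \<or> hr m n l i j i' j'" "j < n" "j' < n"
  using assms(2)[unfolded adj_iff[OF assms(1)]] unfolding hr_def by auto

lemma hh:
  assumes "m \<ge> 1" "even n" "l mod 2 = int m mod 2" "j1 < n" "j2 < n"
    "hr m n l i1 j1 i j" "hr m n l i j i2 j2"
  shows "i1 = i2 \<and> j1 = j2"
proof -
  have "H m n l i j i1 j1" using assms(6) hr_sym unfolding hr_def by blast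
  moreover have "H m n l i j i2 j2" using assms(7) unfolding hr_def by blast
  ultimately show ?thesis using huniq[OF assms(1-5)] by blast
qed

lemma four:
  assumes pa: "m \<ge> 1" "n \<ge> 4" "even n" "l mod 2 = int m mod 2" "0 \<le> l" "2*l \<le> int n"
  and e: "htg_adj m n l (ia,ja) (ib,jb)" "htg_adj m n l (ib,jb) (ic,jc)"
         "htg_adj m n l (ic,jc) (idd,jd)" "htg_adj m n l (idd,jd) (ia,ja)"
  and d: "(ia,ja) \<noteq> (ic,jc)" "(ib,jb) \<noteq> (idd,jd)"
  shows "EXC m n l"
proof -
  have n0: "0 < n" using pa(2) by simp
  note c1 = adj_cases[OF n0 e(1)] and c2 = adj_cases[OF n0 e(2)]
   and c3 = adj_cases[OF n0 e(3)] and c4 = adj_cases[OF n0 e(4)]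
  have P0: "vert n ia ja ib jb \<Longrightarrow> vert n ib jb ic jc \<Longrightarrow> vert n ic jc idd jd \<Longrightarrow> vert n idd jd ia ja \<Longrightarrow> EXC m n l"
    using p0[OF pa(2) c1(2) c2(2) c3(2) c4(2) _ _ _ _ d] unfolding EXC_def by blast
  have P1: "hr m n l ia ja ib jb \<Longrightarrow> vert n ib jb ic jc \<Longrightarrow> vert n ic jc idd jd \<Longrightarrow> vert n idd jd ia ja \<Longrightarrow> EXC m n l"
     "hr m n l ib jb ic jc \<Longrightarrow> vert n ic jc idd jd \<Longrightarrow> vert n idd jd ia ja \<Longrightarrow> vert n ia ja ib jb \<Longrightarrow> EXC m n l"
     "hr m n l ic jc idd jd \<Longrightarrow> vert n idd jd ia ja \<Longrightarrow> vert n ia ja ib jb \<Longrightarrow> vert n ib jb ic jc \<Longrightarrow> EXC m n l"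
     "hr m n l idd jd ia ja \<Longrightarrow> vert n ia ja ib jb \<Longrightarrow> vert n ib jb ic jc \<Longrightarrow> vert n ic jc idd jd \<Longrightarrow> EXC m n l"
    using p1[OF pa] unfolding EXC_def by blast+
  have P2: "hr m n l ia ja ib jb \<Longrightarrow> vert n ib jb ic jc \<Longrightarrow> hr m n l ic jc idd jd \<Longrightarrow> vert n idd jd ia ja \<Longrightarrow> EXC m n l"
     "hr m n l ib jb ic jc \<Longrightarrow> vert n ic jc idd jd \<Longrightarrow> hr m n l idd jd ia ja \<Longrightarrow> vert n ia ja ib jb \<Longrightarrow> EXC m n l"
    using p2[OF pa] by blast+
  have HH: "\<not> (hr m n l ia ja ib jb \<and> hr m n l ib jb ic jc)"
     "\<not> (hr m n l ib jb ic jc \<and> hr m n l ic jc idd jd)"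
     "\<not> (hr m n l ic jc idd jd \<and> hr m n l idd jd ia ja)"
     "\<not> (hr m n l idd jd ia ja \<and> hr m n l ia ja ib jb)"
    using hh[OF pa(1,3,4)] c1(2,3) c2(2,3) c3(2,3) c4(2,3) d by blast+
  show ?thesis using c1(1) c2(1) c3(1) c4(1) P0 P1 P2 HH by blast
qed

lemma even_cycle:
  fixes f :: "'a \<Rightarrow> bool"
  assumes "is_cycle V E c" "\<And>v w. E v w \<Longrightarrow> f v \<noteq> f w"
  shows "even (length c)"
proof -
  let ?L = "length c"
  have L: "3 \<le> ?L" and adj: "\<And>k. k < ?L \<Longrightarrow> E (c ! k) (c ! ((k + 1) mod ?L))"
    using assms(1) unfolding is_cycle_def by auto
  have inv: "k < ?L \<Longrightarrow> f (c ! k) = (f (c ! 0) = even k)" for k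
  proof (induction k)
    case 0 then show ?case by simp
  next
    case (Suc k)
    then have "k < ?L" by simp
    have "E (c ! k) (c ! ((k + 1) mod ?L))" by (rule adj) fact
    moreover have "(k + 1) mod ?L = Suc k" using Suc.prems by simp
    ultimately have "f (c ! k) \<noteq> f (c ! Suc k)" using assms(2) by force
    then show ?case using Suc.IH[OF \<open>k < ?L\<close>] by auto
  qed
  have "E (c ! (?L - 1)) (c ! ((?L - 1 + 1) mod ?L))" using L by (intro adj) simp
  moreover have "?L - 1 + 1 = ?L" using L by simp
  then have "(?L - 1 + 1) mod ?L = 0" by simp
  ultimately have "f (c ! (?L - 1)) \<noteq> f (c ! 0)" using assms(2) by force
  with inv[of "?L - 1"] L have "\<not> even (?L - 1)" by auto
  then show ?thesis using L by simp
qed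

lemma len4: "length xs = 4 \<Longrightarrow> \<exists>a b c d. xs = [a,b,c,d]"
  by (auto simp: length_Suc_conv numeral_eq_Suc)

lemma cyc4_facts:
  assumes "is_cycle V E [a,b,c,d]"
  shows "E a b" "E b c" "E c d" "E d a" "a \<noteq> c" "b \<noteq> d"
proof -
  have h: "\<forall>k<4. E ([a,b,c,d] ! k) ([a,b,c,d] ! ((k + 1) mod 4))" "distinct [a,b,c,d]"
    using assms unfolding is_cycle_def by auto
  show "E a b" using h(1) by (auto dest: spec[of _ 0])
  show "E b c" using h(1) by (auto dest: spec[of _ 1])
  show "E c d" using h(1) by (auto dest: spec[of _ 2])
  show "E d a" using h(1) by (auto dest: spec[of _ 3])
  show "a \<noteq> c" "b \<noteq> d" using h(2) by auto
qed

lemma cyc4: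
  assumes "E a b" "E b c" "E c d" "E d a" "distinct [a,b,c,d]" "\<And>v w. E v w \<Longrightarrow> v \<in> V"
  shows "is_cycle V E [a,b,c,d]"
proof -
  have "E ([a,b,c,d] ! k) ([a,b,c,d] ! ((k + 1) mod length [a,b,c,d]))" if "k < length [a,b,c,d]" for k
  proof -
    from that have "k = 0 \<or> k = 1 \<or> k = 2 \<or> k = 3" by (simp; presburger)
    then show ?thesis using assms(1-4) by (elim disjE) simp_all
  qed
  moreover have "set [a,b,c,d] \<subseteq> V" using assms(1-4,6) by auto
  ultimately show ?thesis unfolding is_cycle_def using assms(5) by simp
qed

lemma cyc6:
  assumes "E a b" "E b c" "E c d" "E d e" "E e f" "E f a" "distinct [a,b,c,d,e,f]" "\<And>v w. E v w \<Longrightarrow> v \<in> V"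
  shows "is_cycle V E [a,b,c,d,e,f]"
proof -
  have "E ([a,b,c,d,e,f] ! k) ([a,b,c,d,e,f] ! ((k + 1) mod length [a,b,c,d,e,f]))" if "k < length [a,b,c,d,e,f]" for k
  proof -
    from that have "k = 0 \<or> k = 1 \<or> k = 2 \<or> k = 3 \<or> k = 4 \<or> k = 5" by (simp; presburger)
    then show ?thesis using assms(1-6) by (elim disjE) simp_all
  qed
  moreover have "set [a,b,c,d,e,f] \<subseteq> V" using assms(1-6,8) by auto
  ultimately show ?thesis unfolding is_cycle_def using assms(7) by simp
qed

lemma adj_V: "0 < n \<Longrightarrow> i < m \<Longrightarrow> j + 1 < n \<Longrightarrow> htg_adj m n l (i,j) (i,j+1)"
  unfolding adj_iff vert_def VE_def st_def by simp
lemma adj_W: "0 < n \<Longrightarrow> i < m \<Longrightarrow> htg_adj m n l (i,n-1) (i,0)"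
  unfolding adj_iff vert_def VE_def st_def by simp
lemma adj_F: "0 < n \<Longrightarrow> i + 1 < m \<Longrightarrow> j < n \<Longrightarrow> odd (i+j) \<Longrightarrow> htg_adj m n l (i,j) (i+1,j)"
  unfolding adj_iff H_def FE_def by auto
lemma adj_J: "0 < n \<Longrightarrow> 1 \<le> m \<Longrightarrow> j < n \<Longrightarrow> j' < n \<Longrightarrow> j mod 2 = m mod 2 \<Longrightarrow> int n dvd (int j' - int j - l)
   \<Longrightarrow> htg_adj m n l (m-1,j) (0,j')"
  unfolding adj_iff H_def JE_def st_def by simp
lemma adj_sym: "htg_adj m n l v w \<Longrightarrow> htg_adj m n l w v"
  unfolding htg_adj_def by auto
lemma adj_mem: "htg_adj m n l v w \<Longrightarrow> v \<in> htg_verts m n"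
  unfolding htg_adj_def by auto

lemma cubic_l1:
  assumes "htg_simple_cubic 1 n 1" "n \<ge> 4"
  shows False
proof -
  have n0: "0 < n" using assms(2) by simp
  have v: "(0,1) \<in> htg_verts 1 n" using assms(2) unfolding htg_verts_def by simp
  have sub: "{w. htg_adj 1 n 1 (0,1) w} \<subseteq> {(0,0),(0,2)}"
  proof
    fix w assume "w \<in> {w. htg_adj 1 n 1 (0,1) w}"
    then obtain i' j' where w: "w = (i',j')" and a: "htg_adj 1 n 1 (0,1) (i',j')" by (cases w) auto
    from a[unfolded adj_iff[OF n0]] have i': "i' = 0" and j': "j' < n" and vh: "vert n 0 1 i' j' \<or> H 1 n 1 0 1 i' j'" by auto
    have s2: "st n 1 1 2" and s0: "st n 0 1 1" and s0': "st n 1 (-1) 0" unfolding st_def by simp_all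
    have two: "2 < n" using assms(2) by simp
    have "j' = 0 \<or> j' = 2"
    proof -
      from vh show ?thesis
      proof
        assume vv: "vert n 0 1 i' j'"
        obtain d where d: "d = 1 \<or> d = -1" "st n 1 d j'" using vert_st[OF vv] by blast
        from d(1) show ?thesis
        proof
          assume "d = 1" then show ?thesis using st_uniq[OF _ s2 j' two] d(2) by simp
        next
          assume "d = -1" then show ?thesis using st_uniq[OF _ s0' j' n0] d(2) by simp
        qed
      next
        assume "H 1 n 1 0 1 i' j'"
        then have "st n 1 1 j' \<or> st n j' 1 1" unfolding H_def FE_def JE_def by auto
        then show ?thesis
        proof
          assume "st n 1 1 j'" then show ?thesis using st_uniq[OF _ s2 j' two] by simp
        next
          assume "st n j' 1 1" then show ?thesis using st_uniq2[OF _ s0 j' n0] by simp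
        qed
      qed
    qed
    then show "w \<in> {(0,0),(0,2)}" using w i' by auto
  qed
  have "card {w. htg_adj 1 n 1 (0,1) w} \<le> card {(0::nat,0::nat),(0,2)}" by (rule card_mono[OF _ sub]) simp
  also have "\<dots> = 2" by simp
  finally show False using assms(1) v unfolding htg_simple_cubic_def by auto
qed



lemma adj_V': "0 < n \<Longrightarrow> i < m \<Longrightarrow> j' = j + 1 \<Longrightarrow> j' < n \<Longrightarrow> htg_adj m n l (i,j) (i,j')"
  using adj_V by blast
lemma adj_J': "0 < n \<Longrightarrow> 1 \<le> m \<Longrightarrow> i = m - 1 \<Longrightarrow> j < n \<Longrightarrow> j' < n \<Longrightarrow> j mod 2 = m mod 2
   \<Longrightarrow> int n dvd (int j' - int j - l) \<Longrightarrow> htg_adj m n l (i,j) (0,j')"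
  using adj_J by blast
lemma adj_F': "0 < n \<Longrightarrow> i + 1 < m \<Longrightarrow> i' = i + 1 \<Longrightarrow> j < n \<Longrightarrow> odd (i+j) \<Longrightarrow> htg_adj m n l (i,j) (i',j)"
  using adj_F by blast

lemma ex4_n4:
  assumes "m \<ge> 1" "n = 4"
  shows "\<exists>c. is_cycle (htg_verts m n) (htg_adj m n l) c \<and> length c = 4"
proof -
  have n0: "0 < n" using assms by simp
  have e1: "htg_adj m n l (0,0) (0,1)" by (rule adj_V') (use assms in auto)
  have e2: "htg_adj m n l (0,1) (0,2)" by (rule adj_V') (use assms in auto)
  have e3: "htg_adj m n l (0,2) (0,3)" by (rule adj_V') (use assms in auto)
  have e4: "htg_adj m n l (0,3) (0,0)" using adj_W[OF n0, of 0 m l] assms by simp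
  have "is_cycle (htg_verts m n) (htg_adj m n l) [(0,0),(0,1),(0,2),(0,3)]"
    by (rule cyc4[OF e1 e2 e3 e4 _ adj_mem]) simp
  then show ?thesis by (intro exI[of _ "[(0,0),(0,1),(0,2),(0,3)]"]) simp
qed

lemma ex4_l3:
  assumes "m = 1" "n > 4" "even n" "l = 3"
  shows "\<exists>c. is_cycle (htg_verts m n) (htg_adj m n l) c \<and> length c = 4"
proof -
  have n0: "0 < n" and n6: "n \<ge> 6" using assms by presburger+
  have e1: "htg_adj m n l (0,1) (0,4)" by (rule adj_J') (use assms n6 in auto)
  have e2: "htg_adj m n l (0,4) (0,3)" by (rule adj_sym, rule adj_V') (use assms n6 in auto)
  have e3: "htg_adj m n l (0,3) (0,2)" by (rule adj_sym, rule adj_V') (use assms n6 in auto)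
  have e4: "htg_adj m n l (0,2) (0,1)" by (rule adj_sym, rule adj_V') (use assms n6 in auto)
  have "is_cycle (htg_verts m n) (htg_adj m n l) [(0,1),(0,4),(0,3),(0,2)]"
    by (rule cyc4[OF e1 e2 e3 e4 _ adj_mem]) simp
  then show ?thesis by (intro exI[of _ "[(0,1),(0,4),(0,3),(0,2)]"]) simp
qed

lemma ex4_h1:
  assumes "m = 1" "n > 4" "n mod 4 = 2" "2 * l = int n"
  shows "\<exists>c. is_cycle (htg_verts m n) (htg_adj m n l) c \<and> length c = 4"
proof -
  define L where "L = nat l"
  have "0 \<le> l" using assms by linarith
  then have lL: "l = int L" unfolding L_def by simp
  have nL: "n = 2 * L" using assms lL by presburger
  have oL: "odd L" using assms lL by presburger
  have L3: "L \<ge> 3" using assms lL by presburger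
  have n0: "0 < n" using assms by simp
  have e1: "htg_adj m n l (0,1) (0,L+1)" by (rule adj_J') (use assms lL nL L3 in auto)
  have e2: "htg_adj m n l (0,L+1) (0,L+2)" by (rule adj_V') (use assms nL L3 in auto)
  have pL: "(L+2) mod 2 = m mod 2" using oL assms(1) by presburger
  have e3: "htg_adj m n l (0,L+2) (0,2)" by (rule adj_J') (use assms lL nL L3 pL in auto)
  have e4: "htg_adj m n l (0,2) (0,1)" by (rule adj_sym, rule adj_V') (use assms nL L3 in auto)
  have "is_cycle (htg_verts m n) (htg_adj m n l) [(0,1),(0,L+1),(0,L+2),(0,2)]"
    by (rule cyc4[OF e1 e2 e3 e4 _ adj_mem]) (use L3 in simp)
  then show ?thesis by (intro exI[of _ "[(0,1),(0,L+1),(0,L+2),(0,2)]"]) simp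
qed

lemma ex4_h2:
  assumes "m = 1" "n > 4" "n mod 4 = 0" "2 * l = int n - 2"
  shows "\<exists>c. is_cycle (htg_verts m n) (htg_adj m n l) c \<and> length c = 4"
proof -
  define L where "L = nat l"
  have "0 \<le> l" using assms by linarith
  then have lL: "l = int L" unfolding L_def by simp
  have nL: "n = 2 * L + 2" using assms lL by presburger
  have oL: "odd L" using assms lL by presburger
  have L3: "L \<ge> 3" using assms lL by presburger
  have n0: "0 < n" using assms by simp
  have e1: "htg_adj m n l (0,1) (0,L+1)" by (rule adj_J') (use assms lL nL L3 in auto)
  have e2: "htg_adj m n l (0,L+1) (0,L+2)" by (rule adj_V') (use assms nL L3 in auto)
  have pL: "(L+2) mod 2 = m mod 2" using oL assms(1) by presburger
  have dv: "int n dvd (int 0 - int (L+2) - l)"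
  proof -
    have "int 0 - int (L+2) - l = - int n" using nL lL by simp
    then show ?thesis by simp
  qed
  have e3: "htg_adj m n l (0,L+2) (0,0)" by (rule adj_J') (use assms nL L3 pL dv in auto)
  have e4: "htg_adj m n l (0,0) (0,1)" by (rule adj_V') (use assms nL L3 in auto)
  have "is_cycle (htg_verts m n) (htg_adj m n l) [(0,1),(0,L+1),(0,L+2),(0,0)]"
    by (rule cyc4[OF e1 e2 e3 e4 _ adj_mem]) (use L3 in simp)
  then show ?thesis by (intro exI[of _ "[(0,1),(0,L+1),(0,L+2),(0,0)]"]) simp
qed

lemma ex4_m2:
  assumes "m = 2" "n \<ge> 4" "l = 0 \<or> l = 2"
  shows "\<exists>c. is_cycle (htg_verts m n) (htg_adj m n l) c \<and> length c = 4"
proof -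
  have n0: "0 < n" using assms by simp
  from assms(3) show ?thesis
  proof
    assume l0: "l = 0"
    have e1: "htg_adj m n l (0,0) (1,0)" by (rule adj_sym, rule adj_J') (use assms l0 in auto)
    have e2: "htg_adj m n l (1,0) (1,1)" by (rule adj_V') (use assms in auto)
    have e3: "htg_adj m n l (1,1) (0,1)" by (rule adj_sym, rule adj_F') (use assms in auto)
    have e4: "htg_adj m n l (0,1) (0,0)" by (rule adj_sym, rule adj_V') (use assms in auto)
    have "is_cycle (htg_verts m n) (htg_adj m n l) [(0,0),(1,0),(1,1),(0,1)]"
      by (rule cyc4[OF e1 e2 e3 e4 _ adj_mem]) simp
    then show ?thesis by (intro exI[of _ "[(0,0),(1,0),(1,1),(0,1)]"]) simp
  next
    assume l2: "l = 2"
    have e1: "htg_adj m n l (0,1) (1,1)" by (rule adj_F') (use assms in auto)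
    have e2: "htg_adj m n l (1,1) (1,0)" by (rule adj_sym, rule adj_V') (use assms in auto)
    have e3: "htg_adj m n l (1,0) (0,2)" by (rule adj_J') (use assms l2 in auto)
    have e4: "htg_adj m n l (0,2) (0,1)" by (rule adj_sym, rule adj_V') (use assms in auto)
    have "is_cycle (htg_verts m n) (htg_adj m n l) [(0,1),(1,1),(1,0),(0,2)]"
      by (rule cyc4[OF e1 e2 e3 e4 _ adj_mem]) simp
    then show ?thesis by (intro exI[of _ "[(0,1),(1,1),(1,0),(0,2)]"]) simp
  qed
qed

lemma ex6_m2:
  assumes "m \<ge> 2" "n \<ge> 4"
  shows "\<exists>c. is_cycle (htg_verts m n) (htg_adj m n l) c \<and> length c = 6"
proof -
  have n0: "0 < n" using assms by simp
  have e1: "htg_adj m n l (0,1) (1,1)" by (rule adj_F') (use assms in auto)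
  have e2: "htg_adj m n l (1,1) (1,2)" by (rule adj_V') (use assms in auto)
  have e3: "htg_adj m n l (1,2) (1,3)" by (rule adj_V') (use assms in auto)
  have e4: "htg_adj m n l (1,3) (0,3)" by (rule adj_sym, rule adj_F') (use assms in auto)
  have e5: "htg_adj m n l (0,3) (0,2)" by (rule adj_sym, rule adj_V') (use assms in auto)
  have e6: "htg_adj m n l (0,2) (0,1)" by (rule adj_sym, rule adj_V') (use assms in auto)
  have "is_cycle (htg_verts m n) (htg_adj m n l) [(0,1),(1,1),(1,2),(1,3),(0,3),(0,2)]"
    by (rule cyc6[OF e1 e2 e3 e4 e5 e6 _ adj_mem]) simp
  then show ?thesis by (intro exI[of _ "[(0,1),(1,1),(1,2),(1,3),(0,3),(0,2)]"]) simp
qed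

lemma ex6_m1:
  assumes "m = 1" "even n" "l = int L" "odd L" "L \<ge> 3" "L + 3 \<le> n"
  shows "\<exists>c. is_cycle (htg_verts m n) (htg_adj m n l) c \<and> length c = 6"
proof -
  have n0: "0 < n" using assms by simp
  have e1: "htg_adj m n l (0,1) (0,L+1)" by (rule adj_J') (use assms in auto)
  have e2: "htg_adj m n l (0,L+1) (0,L)" by (rule adj_sym, rule adj_V') (use assms in auto)
  have e3: "htg_adj m n l (0,L) (0,L-1)" by (rule adj_sym, rule adj_V') (use assms in auto)
  have odn: "(n-1) mod 2 = 1" using assms(2) n0 by presburger
  have e4: "htg_adj m n l (0,L-1) (0,n-1)" by (rule adj_sym, rule adj_J') (use assms odn in auto)
  have e5: "htg_adj m n l (0,n-1) (0,0)" using adj_W[OF n0, of 0 m l] assms by simp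
  have e6: "htg_adj m n l (0,0) (0,1)" by (rule adj_V') (use assms in auto)
  have "is_cycle (htg_verts m n) (htg_adj m n l) [(0,1),(0,L+1),(0,L),(0,L-1),(0,n-1),(0,0)]"
    by (rule cyc6[OF e1 e2 e3 e4 e5 e6 _ adj_mem]) (use assms in auto)
  then show ?thesis by (intro exI[of _ "[(0,1),(0,L+1),(0,L),(0,L-1),(0,n-1),(0,0)]"]) simp
qed



theorem theorem5p1:
  fixes m n :: nat and l :: int
  assumes "m \<ge> 1" and "n \<ge> 4" and "even n"
    and "l mod 2 = int m mod 2"
    and "htg_simple_cubic m n l"
    and "0 \<le> l" and "2 * l \<le> int n"
  shows "girth (htg_verts m n) (htg_adj m n l) =
    (if n = 4
        \<or> (m = 1 \<and> n > 4 \<and> l = 3)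
        \<or> (m = 1 \<and> n > 4 \<and> n mod 4 = 2 \<and> 2 * l = int n)
        \<or> (m = 1 \<and> n > 4 \<and> n mod 4 = 0 \<and> 2 * l = int n - 2)
        \<or> (m = 2 \<and> n > 4 \<and> (l = 0 \<or> l = 2))
     then 4 else 6)"
proof -
  let ?V = "htg_verts m n" and ?E = "htg_adj m n l"
  have n0: "0 < n" using assms(2) by simp
  have ce: "(n = 4
        \<or> (m = 1 \<and> n > 4 \<and> l = 3)
        \<or> (m = 1 \<and> n > 4 \<and> n mod 4 = 2 \<and> 2 * l = int n)
        \<or> (m = 1 \<and> n > 4 \<and> n mod 4 = 0 \<and> 2 * l = int n - 2)
        \<or> (m = 2 \<and> n > 4 \<and> (l = 0 \<or> l = 2))) \<longleftrightarrow> EXC m n l"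
    unfolding EXC_def using assms(2) by auto
  define g :: nat where "g = (if EXC m n l then 4 else 6)"
  have lb: "g \<le> length c" if cyc: "is_cycle ?V ?E c" for c
  proof -
    have "even (length c)"
    proof (rule even_cycle[OF cyc, of "\<lambda>v. even (fst v + snd v)"])
      fix v w assume "htg_adj m n l v w"
      then show "even (fst v + snd v) \<noteq> even (fst w + snd w)"
        using adj_par[of m n l "fst v" "snd v" "fst w" "snd w"] assms(1,3,4) n0 by simp
    qed
    moreover have "3 \<le> length c" using cyc unfolding is_cycle_def by simp
    moreover have "length c \<noteq> 4" if ne: "\<not> EXC m n l"
    proof
      assume "length c = 4"
      then obtain a b c' d where cc: "c = [a,b,c',d]" using len4 by blast
      note f = cyc4_facts[OF cyc[unfolded cc]]
      obtain ia ja where a: "a = (ia,ja)" by (cases a)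
      obtain ib jb where b: "b = (ib,jb)" by (cases b)
      obtain ic jc where c: "c' = (ic,jc)" by (cases c')
      obtain idd jd where d: "d = (idd,jd)" by (cases d)
      have e1: "htg_adj m n l (ia,ja) (ib,jb)" using f(1) a b by simp
      have e2: "htg_adj m n l (ib,jb) (ic,jc)" using f(2) b c by simp
      have e3: "htg_adj m n l (ic,jc) (idd,jd)" using f(3) c d by simp
      have e4: "htg_adj m n l (idd,jd) (ia,ja)" using f(4) d a by simp
      have d1: "(ia,ja) \<noteq> (ic,jc)" using f(5) a c by simp
      have d2: "(ib,jb) \<noteq> (idd,jd)" using f(6) b d by simp
      have "EXC m n l" by (rule four[OF assms(1,2,3,4,6,7) e1 e2 e3 e4 d1 d2])
      with ne show False ..
    qed
    ultimately show ?thesis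
    proof (cases "EXC m n l")
      case True
      moreover have "4 \<le> length c" using \<open>even (length c)\<close> \<open>3 \<le> length c\<close> by presburger
      ultimately show ?thesis by (simp add: g_def)
    next
      case False
      then have "length c \<noteq> 4" using \<open>\<not> EXC m n l \<Longrightarrow> length c \<noteq> 4\<close> by blast
      then have "6 \<le> length c" using \<open>even (length c)\<close> \<open>3 \<le> length c\<close> by presburger
      then show ?thesis using False by (simp add: g_def)
    qed
  qed
  have ex: "\<exists>c. is_cycle ?V ?E c \<and> length c = g"
  proof (cases "EXC m n l")
    case True
    then have "n = 4 \<or> (m = 1 \<and> n > 4 \<and> l = 3) \<or> (m = 1 \<and> n > 4 \<and> n mod 4 = 2 \<and> 2*l = int n)
     \<or> (m = 1 \<and> n > 4 \<and> n mod 4 = 0 \<and> 2*l = int n - 2) \<or> (m = 2 \<and> n \<ge> 4 \<and> (l = 0 \<or> l = 2))"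
      unfolding EXC_def using assms(2) by auto
    then have "\<exists>c. is_cycle ?V ?E c \<and> length c = 4"
    proof (elim disjE conjE)
      assume "n = 4" then show ?thesis by (rule ex4_n4[OF assms(1)])
    next
      assume "m = 1" "n > 4" "l = 3" then show ?thesis by (rule ex4_l3[OF _ _ assms(3)])
    next
      assume "m = 1" "n > 4" "n mod 4 = 2" "2*l = int n" then show ?thesis by (rule ex4_h1)
    next
      assume "m = 1" "n > 4" "n mod 4 = 0" "2*l = int n - 2" then show ?thesis by (rule ex4_h2)
    next
      assume "m = 2" "n \<ge> 4" "l = 0" then show ?thesis using ex4_m2 by blast
    next
      assume "m = 2" "n \<ge> 4" "l = 2" then show ?thesis using ex4_m2 by blast
    qed
    then show ?thesis unfolding g_def using True by simp
  next
    case False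
    have "\<exists>c. is_cycle ?V ?E c \<and> length c = 6"
    proof (cases "m \<ge> 2")
      case True then show ?thesis using ex6_m2 assms(2) by blast
    next
      case m2: False
      then have m1: "m = 1" using assms(1) by simp
      define L where "L = nat l"
      have lL: "l = int L" unfolding L_def using assms(6) by simp
      have oL: "odd L" using assms(4) m1 lL by presburger
      have L1: "L \<noteq> 1"
      proof
        assume "L = 1"
        then show False using cubic_l1[of n] assms(5) m1 lL assms(2) by simp
      qed
      have L3: "L \<ge> 3" using oL L1 by presburger
      have "L + 3 \<le> n" using assms(7) lL L3 by linarith
      then show ?thesis using ex6_m1[OF m1 assms(3) lL oL L3] by blast
    qed
    then show ?thesis unfolding g_def using False by simp
  qed
  have "girth ?V ?E = g"
    unfolding girth_def
  proof (rule Least_equality)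
    show "\<exists>c. is_cycle ?V ?E c \<and> length c = g" by (rule ex)
  next
    fix k assume "\<exists>c. is_cycle ?V ?E c \<and> length c = k"
    then show "g \<le> k" using lb by blast
  qed
  then show ?thesis unfolding g_def using ce by simp
qed


end
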